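(* Let $n,x$ be integers with $1<x<n$, so that $G=C_{2n}(x,1,n)$ is a $5$-regular circulant graph. If $n\equiv 2 \pmod 3$, $x\equiv 1\pmod 3$ and $x<\tfrac{n}{2}$, then $G$ is word-representable.
   Context: Two distinct letters $x,y$ alternate in a word $w$ if, after deleting all other letters from $w$, the resulting word is of the form $xyxy\cdots$ or $yxyx\cdots$ (of even or odd length). A graph $G=(V,E)$ is word-representable if there is a word $w$ over the alphabet $V$, containing every letter of $V$ at least once, such that for all distinct $x,y\in V$, $xy\in E$ if and only if $x$ and $y$ alternate in $w$. For an integer $m$ and a set $R$ of positive integers each at most $m/2$, the circulant graph $C_m(R)$ has vertex set $\{0,1,\dots,m-1\}$, with $i$ and $j$ adjacent iff $\min(|i-j|,\,m-|i-j|)\in R$. $C_{2n}(x,1,n)$ denotes the circulant graph on $2n$ vertices with jump set $\{1,x,n\}$; it is $5$-regular exactly when $1<x<n$. *)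

theory Defs
  imports Main
begin

definition alternate :: "'a list \<Rightarrow> 'a \<Rightarrow> 'a \<Rightarrow> bool" where
  "alternate w x y \<longleftrightarrow>
     (let u = filter (\<lambda>z. z = x \<or> z = y) w in
        \<forall>i. Suc i < length u \<longrightarrow> u ! i \<noteq> u ! Suc i)"

definition word_representable :: "'a set \<Rightarrow> ('a \<Rightarrow> 'a \<Rightarrow> bool) \<Rightarrow> bool" where
  "word_representable V E \<longleftrightarrow>
     (\<exists>w. set w = V \<and>
          (\<forall>x\<in>V. \<forall>y\<in>V. x \<noteq> y \<longrightarrow> (E x y \<longleftrightarrow> alternate w x y)))"

definition circ_vertices :: "nat \<Rightarrow> nat set" where
  "circ_vertices m = {0..<m}"

definition circ_adj :: "nat \<Rightarrow> nat set \<Rightarrow> nat \<Rightarrow> nat \<Rightarrow> bool" where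
  "circ_adj m R i j \<longleftrightarrow>
     i < m \<and> j < m \<and> i \<noteq> j \<and>
     min (if i \<le> j then j - i else i - j) (m - (if i \<le> j then j - i else i - j)) \<in> R"

end

theory Submission
  imports Defs
begin


definition blk :: "nat \<Rightarrow> (nat \<Rightarrow> bool) \<Rightarrow> nat list" where
  "blk N P = filter P [0..<N]"

lemma filt_upt1:
  assumes "u \<noteq> v" "\<not> (P u \<and> P v)"
  shows "filter (\<lambda>z. P z \<and> (z = u \<or> z = v)) [0..<N] =
     (if P u \<and> u < N then [u] else []) @ (if P v \<and> v < N then [v] else [])"
  using assms by (induction N) (auto simp: less_Suc_eq)

lemma filt_upt2:
  assumes "u < v" "P u" "P v"
  shows "filter (\<lambda>z. P z \<and> (z = u \<or> z = v)) [0..<N] =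
     (if u < N then [u] else []) @ (if v < N then [v] else [])"
  using assms by (induction N) (auto simp: less_Suc_eq)

lemma filt_blk:
  assumes "u < N" "v < N" "u \<noteq> v" "\<not> (P u \<and> P v)"
  shows "filter (\<lambda>z. z = u \<or> z = v) (blk N P) =
     (if P u then [u] else []) @ (if P v then [v] else [])"
  using filt_upt1[OF assms(3,4), of N] assms(1,2) by (simp add: blk_def filter_filter)

lemma filt_blk2:
  assumes "u < v" "v < N" "P u" "P v"
  shows "filter (\<lambda>z. z = u \<or> z = v) (blk N P) = [u, v]"
  using filt_upt2[OF assms(1,3,4), of N] assms(1,2) by (simp add: blk_def filter_filter)

definition QQ :: "nat \<Rightarrow> (nat \<Rightarrow> nat) \<Rightarrow> nat list" where
  "QQ N col = blk N (\<lambda>z. col z = 0) @ blk N (\<lambda>z. col z = 1) @ blk N (\<lambda>z. col z = 2)"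

definition TT :: "nat \<Rightarrow> (nat \<Rightarrow> nat) \<Rightarrow> nat list" where
  "TT N col = QQ N col @ rev (blk N (\<lambda>z. col z = 0)) @ rev (blk N (\<lambda>z. col z = 1))
      @ rev (blk N (\<lambda>z. col z = 2))"

definition gad :: "nat \<Rightarrow> (nat \<Rightarrow> nat) \<Rightarrow> (nat \<Rightarrow> nat \<Rightarrow> bool) \<Rightarrow> nat \<Rightarrow> nat \<Rightarrow> nat list" where
  "gad N col E p q =
   (if col p = 0 \<and> col q = 1 \<and> \<not> E p q then
      blk N (\<lambda>z. col z = 0 \<and> E z q) @ [q] @ blk N (\<lambda>z. col z = 0 \<and> \<not> E z q)
      @ blk N (\<lambda>z. col z = 1 \<and> z \<noteq> q) @ blk N (\<lambda>z. col z = 2) @ QQ N col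
    else if col p = 1 \<and> col q = 2 \<and> \<not> E p q then
      blk N (\<lambda>z. col z = 0) @ blk N (\<lambda>z. col z = 1 \<and> E z q) @ [q]
      @ blk N (\<lambda>z. col z = 1 \<and> \<not> E z q) @ blk N (\<lambda>z. col z = 2 \<and> z \<noteq> q) @ QQ N col
    else if col p = 0 \<and> col q = 2 \<and> \<not> E p q then
      blk N (\<lambda>z. col z = 0) @ blk N (\<lambda>z. col z = 1) @ blk N (\<lambda>z. col z = 2 \<and> z \<noteq> q)
      @ blk N (\<lambda>z. col z = 0 \<and> \<not> E z q) @ [q] @ blk N (\<lambda>z. col z = 0 \<and> E z q)
      @ blk N (\<lambda>z. col z = 1) @ blk N (\<lambda>z. col z = 2)
    else [])"

lemma gad_edge:
  assumes "u < N" "v < N" "col u < col v" "col v < 3" "E u v" "E v u"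
  shows "filter (\<lambda>z. z = u \<or> z = v) (gad N col E p q) = [] \<or>
         filter (\<lambda>z. z = u \<or> z = v) (gad N col E p q) = [u, v, u, v]"
proof -
  have "u \<noteq> v" using assms by auto
  then show ?thesis using assms
    unfolding gad_def QQ_def
    by (auto simp: filt_blk)
qed

lemma rep4:
  "(\<exists>a b c. l = [a,b,b,c]) \<or> (\<exists>b c d. l = [b,b,c,d]) \<Longrightarrow> \<exists>i. Suc i < length l \<and> l ! i = l ! Suc i"
  by (auto intro: exI[of _ 0] exI[of _ 1])

lemma TT_edge:
  assumes "u < N" "v < N" "col u < col v" "col v < 3"
  shows "filter (\<lambda>z. z = u \<or> z = v) (TT N col) = [u, v, u, v]"
proof -
  have "u \<noteq> v" using assms by auto
  then show ?thesis using assms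
    unfolding TT_def QQ_def
    by (auto simp: filt_blk rev_filter[symmetric])
qed

lemma gad_nonedge:
  assumes "u < N" "v < N" "col u < col v" "col v < 3" "\<not> E u v"
  shows "\<exists>i. Suc i < length (filter (\<lambda>z. z = u \<or> z = v) (gad N col E u v)) \<and>
     filter (\<lambda>z. z = u \<or> z = v) (gad N col E u v) ! i =
     filter (\<lambda>z. z = u \<or> z = v) (gad N col E u v) ! Suc i"
proof -
  have "u \<noteq> v" using assms by auto
  then have "filter (\<lambda>z. z = u \<or> z = v) (gad N col E u v) = [v,u,u,v] \<or>
             filter (\<lambda>z. z = u \<or> z = v) (gad N col E u v) = [u,u,v,v]"
    using assms unfolding gad_def QQ_def
    by (auto simp: filt_blk)
  then show ?thesis
    by (intro rep4) auto
qed

lemma TT_same: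
  assumes "u < v" "v < N" "col u = col v" "col v < 3"
  shows "\<exists>i. Suc i < length (filter (\<lambda>z. z = u \<or> z = v) (TT N col)) \<and>
     filter (\<lambda>z. z = u \<or> z = v) (TT N col) ! i =
     filter (\<lambda>z. z = u \<or> z = v) (TT N col) ! Suc i"
proof -
  have "col v = 0 \<or> col v = 1 \<or> col v = 2" using assms by auto
  then have "filter (\<lambda>z. z = u \<or> z = v) (TT N col) = [u,v,v,u]"
    using assms unfolding TT_def QQ_def
    by (auto simp: filt_blk filt_blk2 rev_filter[symmetric])
  then show ?thesis
    by (intro rep4) auto
qed

lemma concat_rep_nth:
  "i < 2 * k \<Longrightarrow> concat (replicate k [u, v]) ! i = (if even i then u else v)"
proof (induction k arbitrary: i)
  case 0 then show ?case by simp
next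
  case (Suc k)
  show ?case
  proof (cases "i < 2")
    case True
    then have "i = 0 \<or> i = 1" by auto
    then show ?thesis by auto
  next
    case False
    then obtain j where j: "i = Suc (Suc j)" by (metis add_2_eq_Suc le_add_diff_inverse not_less)
    have "j < 2 * k" using Suc.prems j by simp
    then show ?thesis using Suc.IH[of j] j by simp
  qed
qed

lemma concat_blocks:
  "\<forall>l\<in>set ls. l = [] \<or> l = [u, v, u, v] \<Longrightarrow> \<exists>k. concat ls = concat (replicate k [u, v])"
proof (induction ls)
  case Nil then show ?case by (auto intro: exI[of _ 0])
next
  case (Cons l ls)
  then obtain k where k: "concat ls = concat (replicate k [u, v])" by auto
  from Cons.prems have "l = [] \<or> l = [u, v, u, v]" by simp
  then show ?case
  proof
    assume "l = []" then show ?thesis using k by auto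
  next
    assume "l = [u, v, u, v]"
    then have "concat (l # ls) = concat (replicate (Suc (Suc k)) [u, v])" using k by simp
    then show ?thesis by blast
  qed
qed

lemma alt_rep:
  assumes "u \<noteq> v" "l = concat (replicate k [u, v])"
  shows "\<forall>i. Suc i < length l \<longrightarrow> l ! i \<noteq> l ! Suc i"
proof (intro allI impI)
  fix i assume "Suc i < length l"
  then have "Suc i < 2 * k" using assms(2) by (simp add: length_concat sum_list_replicate)
  then show "l ! i \<noteq> l ! Suc i" using assms concat_rep_nth[of i k u v] concat_rep_nth[of "Suc i" k u v]
    by auto
qed

lemma rep_mid:
  assumes "Suc i < length g" "g ! i = g ! Suc i"
  shows "\<exists>j. Suc j < length (a @ g @ b) \<and> (a @ g @ b) ! j = (a @ g @ b) ! Suc j"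
proof -
  have "(a @ g @ b) ! (length a + i) = g ! i" using assms by (simp add: nth_append)
  moreover have "(a @ g @ b) ! Suc (length a + i) = g ! Suc i" using assms
    by (simp add: nth_append)
  ultimately show ?thesis using assms by (intro exI[of _ "length a + i"]) auto
qed

definition wrd :: "nat \<Rightarrow> (nat \<Rightarrow> nat) \<Rightarrow> (nat \<Rightarrow> nat \<Rightarrow> bool) \<Rightarrow> nat list" where
  "wrd N col E = TT N col @ concat (map (\<lambda>(p, q). gad N col E p q) (List.product [0..<N] [0..<N]))"

lemma alternate_sym: "alternate w x y = alternate w y x"
  unfolding alternate_def by (simp add: disj_commute)

lemma alt_edge:
  assumes "u < N" "v < N" "col u < col v" "col v < 3" "E u v" "E v u"
  shows "alternate (wrd N col E) u v"
proof -
  let ?F = "\<lambda>z. z = u \<or> z = v"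
  let ?ps = "List.product [0..<N] [0..<N]"
  let ?G = "\<lambda>pq. filter ?F (case pq of (p, q) \<Rightarrow> gad N col E p q)"
  have eq: "filter ?F (wrd N col E) = concat ([u,v,u,v] # map ?G ?ps)"
    unfolding wrd_def filter_append filter_concat TT_edge[OF assms(1-4)] map_map comp_def
    by simp
  have all: "\<forall>l\<in>set ([u,v,u,v] # map ?G ?ps). l = [] \<or> l = [u, v, u, v]"
  proof
    fix l assume "l \<in> set ([u,v,u,v] # map ?G ?ps)"
    then consider "l = [u,v,u,v]" | pq where "l = ?G pq"
      by auto
    then show "l = [] \<or> l = [u, v, u, v]"
    proof cases
      case 1 then show ?thesis by simp
    next
      case 2
      obtain p q where "pq = (p, q)" by (cases pq)
      then show ?thesis using 2 gad_edge[OF assms, of p q] by simp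
    qed
  qed
  obtain k where k: "concat ([u,v,u,v] # map ?G ?ps) = concat (replicate k [u, v])"
    using concat_blocks[OF all] by blast
  have "u \<noteq> v" using assms by auto
  then show ?thesis unfolding alternate_def Let_def eq using alt_rep[OF _ k] by blast
qed

lemma nalt_cross:
  assumes "u < N" "v < N" "col u < col v" "col v < 3" "\<not> E u v"
  shows "\<not> alternate (wrd N col E) u v"
proof -
  let ?F = "\<lambda>z. z = u \<or> z = v"
  let ?ps = "List.product [0..<N] [0..<N]"
  have "(u, v) \<in> set ?ps" using assms by simp
  then obtain ys zs where ps: "?ps = ys @ (u, v) # zs" by (meson split_list)
  have "filter ?F (wrd N col E) = (filter ?F (TT N col) @ filter ?F (concat (map (\<lambda>(p, q). gad N col E p q) ys)))
      @ filter ?F (gad N col E u v) @ filter ?F (concat (map (\<lambda>(p, q). gad N col E p q) zs))"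
    unfolding wrd_def ps by simp
  then have eq: "filter ?F (wrd N col E) = (filter ?F (TT N col) @ filter ?F (concat (map (\<lambda>(p, q). gad N col E p q) ys)))
      @ filter ?F (gad N col E u v) @ filter ?F (concat (map (\<lambda>(p, q). gad N col E p q) zs))" .
  obtain i where i: "Suc i < length (filter ?F (gad N col E u v))"
     "filter ?F (gad N col E u v) ! i = filter ?F (gad N col E u v) ! Suc i"
    using gad_nonedge[where u=u and v=v and N=N and col=col and E=E, OF assms] by blast
  obtain j where "Suc j < length (filter ?F (wrd N col E))"
     "filter ?F (wrd N col E) ! j = filter ?F (wrd N col E) ! Suc j"
    using rep_mid[OF i] unfolding eq by blast
  then show ?thesis unfolding alternate_def Let_def by blast
qed

lemma nalt_same:
  assumes "u < v" "v < N" "col u = col v" "col v < 3"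
  shows "\<not> alternate (wrd N col E) u v"
proof -
  let ?F = "\<lambda>z. z = u \<or> z = v"
  have "filter ?F (wrd N col E) = [] @ filter ?F (TT N col) @ filter ?F (concat (map (\<lambda>(p, q). gad N col E p q) (List.product [0..<N] [0..<N])))"
    unfolding wrd_def by simp
  then have eq: "filter ?F (wrd N col E) = [] @ filter ?F (TT N col) @ filter ?F (concat (map (\<lambda>(p, q). gad N col E p q) (List.product [0..<N] [0..<N])))" .
  obtain i where i: "Suc i < length (filter ?F (TT N col))"
     "filter ?F (TT N col) ! i = filter ?F (TT N col) ! Suc i"
    using TT_same[where u=u and v=v and N=N and col=col, OF assms] by blast
  obtain j where "Suc j < length (filter ?F (wrd N col E))"
     "filter ?F (wrd N col E) ! j = filter ?F (wrd N col E) ! Suc j"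
    using rep_mid[OF i] unfolding eq by blast
  then show ?thesis unfolding alternate_def Let_def by blast
qed

lemma set_wrd:
  assumes "\<forall>z<N. col z < 3"
  shows "set (wrd N col E) = {0..<N}"
proof
  show "set (wrd N col E) \<subseteq> {0..<N}"
    unfolding wrd_def TT_def QQ_def gad_def blk_def by auto
next
  show "{0..<N} \<subseteq> set (wrd N col E)"
  proof
    fix z assume z: "z \<in> {0..<N}"
    then have "col z = 0 \<or> col z = 1 \<or> col z = 2" using assms by auto
    then show "z \<in> set (wrd N col E)" using z
      unfolding wrd_def TT_def QQ_def blk_def by auto
  qed
qed

lemma wr_3col:
  fixes N :: nat and col :: "nat \<Rightarrow> nat" and E :: "nat \<Rightarrow> nat \<Rightarrow> bool"
  assumes col3: "\<forall>z<N. col z < 3"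
    and sym: "\<forall>a b. E a b \<longrightarrow> E b a"
    and prp: "\<forall>a<N. \<forall>b<N. E a b \<longrightarrow> col a \<noteq> col b"
  shows "word_representable {0..<N} E"
  unfolding word_representable_def
proof (intro exI conjI ballI impI)
  show "set (wrd N col E) = {0..<N}" using set_wrd[OF col3] .
next
  fix a b assume a: "a \<in> {0..<N}" and b: "b \<in> {0..<N}" and ab: "a \<noteq> b"
  have aN: "a < N" and bN: "b < N" using a b by auto
  consider "col a < col b" | "col b < col a" | "col a = col b" by linarith
  then show "E a b = alternate (wrd N col E) a b"
  proof cases
    case 1
    have c3: "col b < 3" using col3 bN by blast
    show ?thesis
    proof
      assume "E a b"
      then show "alternate (wrd N col E) a b" using alt_edge[OF aN bN 1 c3] sym by blast
    next
      assume "alternate (wrd N col E) a b"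
      then show "E a b" using nalt_cross[OF aN bN 1 c3] by blast
    qed
  next
    case 2
    have c3: "col a < 3" using col3 aN by blast
    have "alternate (wrd N col E) a b = alternate (wrd N col E) b a" by (rule alternate_sym)
    moreover have "E a b = E b a" using sym by blast
    moreover have "E b a = alternate (wrd N col E) b a"
    proof
      assume "E b a"
      then show "alternate (wrd N col E) b a" using alt_edge[OF bN aN 2 c3] sym by blast
    next
      assume "alternate (wrd N col E) b a"
      then show "E b a" using nalt_cross[OF bN aN 2 c3] by blast
    qed
    ultimately show ?thesis by simp
  next
    case 3
    have ne: "\<not> E a b" using prp aN bN 3 by blast
    show ?thesis
    proof (cases "a < b")
      case True
      have c3: "col b < 3" using col3 bN by blast
      show ?thesis using nalt_same[OF True bN 3 c3] ne by blast
    next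
      case False
      then have "b < a" using ab by auto
      have c3: "col a < 3" using col3 aN by blast
      have "\<not> alternate (wrd N col E) b a" using nalt_same[OF \<open>b < a\<close> aN 3[symmetric] c3] .
      then show ?thesis using ne alternate_sym by metis
    qed
  qed
qed



definition good :: "nat \<Rightarrow> nat \<Rightarrow> nat \<Rightarrow> bool" where
  "good M t d \<longleftrightarrow> M \<le> 3 * ((t * d) mod M) \<and> 3 * ((t * d) mod M) \<le> 2 * M"

lemma good_intro:
  assumes "t * d = M * q + r" "r < M" "M \<le> 3 * r" "3 * r \<le> 2 * M"
  shows "good M t d"
proof -
  have "(t * d) mod M = r" using assms(1,2) by simp
  then show ?thesis using assms unfolding good_def by simp
qed

lemma div_step:
  fixes M a b :: nat
  assumes "M > 0" "3 * a + M \<le> 3 * b"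
  shows "3 * a div M \<noteq> 3 * b div M"
proof -
  have "(3 * a + M) div M \<le> 3 * b div M" using assms(2) by (rule div_le_mono)
  moreover have "(3 * a + M) div M = 3 * a div M + 1" using assms(1) by (metis div_add_self2 less_not_refl2)
  ultimately show ?thesis by simp
qed

lemma circ_diff:
  assumes M: "M > 0" and g: "good M t d" and ij: "j mod M = (i + d) mod M"
  shows "3 * ((t * i) mod M) div M \<noteq> 3 * ((t * j) mod M) div M"
proof -
  define a where "a = (t * i) mod M"
  define r where "r = (t * d) mod M"
  define b where "b = (t * j) mod M"
  have aM: "a < M" unfolding a_def using M by simp
  have rM: "r < M" unfolding r_def using M by simp
  have "(t * j) mod M = (t * (i + d)) mod M" using ij by (metis mod_mult_right_eq)
  also have "\<dots> = (t * i + t * d) mod M" by (simp add: algebra_simps)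
  also have "\<dots> = (a + r) mod M" unfolding a_def r_def by (simp add: mod_add_eq)
  finally have b: "b = (a + r) mod M" unfolding b_def .
  have r1: "M \<le> 3 * r" and r2: "3 * r \<le> 2 * M" using g unfolding good_def r_def by auto
  show ?thesis
  proof (cases "a + r < M")
    case True
    then have "b = a + r" using b by simp
    then have "3 * a + M \<le> 3 * b" using r1 by simp
    then show ?thesis using div_step[OF M] unfolding a_def b_def by blast
  next
    case False
    then have "b = a + r - M" using b aM rM by (simp add: mod_if)
    then have "3 * b + M \<le> 3 * a" using r2 False by simp
    then show ?thesis using div_step[OF M] unfolding a_def b_def by metis
  qed
qed

lemma adj_cases:
  assumes "circ_adj M S i j"
  shows "\<exists>d\<in>S. j mod M = (i + d) mod M \<or> i mod M = (j + d) mod M"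
proof -
  have i: "i < M" and j: "j < M" and ne: "i \<noteq> j" using assms unfolding circ_adj_def by auto
  define D where "D = (if i \<le> j then j - i else i - j)"
  have m: "min D (M - D) \<in> S" using assms unfolding circ_adj_def D_def by auto
  show ?thesis
  proof (cases "D \<le> M - D")
    case True
    then have "D \<in> S" using m by (simp add: min_def)
    moreover have "j mod M = (i + D) mod M \<or> i mod M = (j + D) mod M"
      unfolding D_def using i j by auto
    ultimately show ?thesis by blast
  next
    case False
    then have "M - D \<in> S" using m by (simp add: min_def)
    moreover have "j mod M = (i + (M - D)) mod M \<or> i mod M = (j + (M - D)) mod M"
    proof (cases "i \<le> j")
      case True
      then have "j + (M - D) = i + M" unfolding D_def using j by auto
      then have "i mod M = (j + (M - D)) mod M" using i by simp
      then show ?thesis by blast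
    next
      case False
      then have "i + (M - D) = j + M" unfolding D_def using i by auto
      then have "j mod M = (i + (M - D)) mod M" using j by simp
      then show ?thesis by blast
    qed
    ultimately show ?thesis by blast
  qed
qed

lemma circ_proper:
  assumes M: "M > 0" and g: "\<forall>d\<in>S. good M t d" and adj: "circ_adj M S i j"
  shows "3 * ((t * i) mod M) div M \<noteq> 3 * ((t * j) mod M) div M"
proof -
  obtain d where d: "d \<in> S" and c: "j mod M = (i + d) mod M \<or> i mod M = (j + d) mod M"
    using adj_cases[OF adj] by blast
  have gd: "good M t d" using g d by blast
  from c show ?thesis
  proof
    assume "j mod M = (i + d) mod M"
    then show ?thesis using circ_diff[OF M gd] by blast
  next
    assume "i mod M = (j + d) mod M"
    then show ?thesis using circ_diff[OF M gd] by metis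
  qed
qed



lemma caseA:
  fixes n x :: nat
  assumes "1 < x" "2 * x < n" "n mod 3 = 2" "x mod 3 = 1" "5 * x \<le> 2 * n"
  shows "\<exists>t. good (2*n) t 1 \<and> good (2*n) t x \<and> good (2*n) t n"
proof -
  define a where "a = n div 3"
  define b where "b = x div 3"
  have n: "n = 3 * a + 2" using assms(3) div_mult_mod_eq[of n 3] unfolding a_def by linarith
  have x: "x = 3 * b + 1" using assms(4) div_mult_mod_eq[of x 3] unfolding b_def by linarith
  have b1: "b \<ge> 1" using assms(1) x by simp
  have a3: "a \<ge> 3" using assms(2) n x b1 by simp
  have ab: "15 * b + 1 \<le> 6 * a" using assms(5) n x by simp
  have g1: "good (2*n) (2*a+3) 1"
    by (rule good_intro[where q=0 and r="2*a+3"]) (use n a3 in simp_all)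
  have gx: "good (2*n) (2*a+3) x"
  proof (rule good_intro[where q=b and r="2*a+3+5*b"])
    show "(2 * a + 3) * x = 2 * n * b + (2 * a + 3 + 5 * b)" unfolding n x by (simp add: algebra_simps)
  qed (use n ab in simp_all)
  have gn: "good (2*n) (2*a+3) n"
  proof (rule good_intro[where q="a+1" and r=n])
    show "(2 * a + 3) * n = 2 * n * (a + 1) + n" unfolding n by (simp add: algebra_simps)
  qed (use n in simp_all)
  show ?thesis using g1 gx gn by blast
qed

lemma caseB:
  fixes n x :: nat
  assumes "odd n" "odd x"
  shows "\<exists>t. good (2*n) t 1 \<and> good (2*n) t x \<and> good (2*n) t n"
proof -
  obtain p where n: "n = 2 * p + 1" using assms(1) oddE by blast
  obtain s where x: "x = 2 * s + 1" using assms(2) oddE by blast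
  have g1: "good (2*n) n 1"
    by (rule good_intro[where q=0 and r=n]) (use n in simp_all)
  have gx: "good (2*n) n x"
  proof (rule good_intro[where q=s and r=n])
    show "n * x = 2 * n * s + n" unfolding x by (simp add: algebra_simps)
  qed (use n in simp_all)
  have gn: "good (2*n) n n"
  proof (rule good_intro[where q=p and r=n])
    show "n * n = 2 * n * p + n" unfolding n by (simp add: algebra_simps)
  qed (use n in simp_all)
  show ?thesis using g1 gx gn by blast
qed

lemma caseC:
  fixes n x :: nat
  assumes "odd n" "even x" "n \<le> 3 * x" "2 * x < n" "n \<ge> 9"
  shows "\<exists>t. good (2*n) t 1 \<and> good (2*n) t x \<and> good (2*n) t n"
proof -
  obtain p where n: "n = 2 * p + 1" using assms(1) oddE by blast
  obtain s where x: "x = 2 * s" using assms(2) evenE by blast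
  have p4: "p \<ge> 4" using assms(5) n by simp
  have g1: "good (2*n) (n+2) 1"
    by (rule good_intro[where q=0 and r="n+2"]) (use n p4 in simp_all)
  have gx: "good (2*n) (n+2) x"
  proof (rule good_intro[where q=s and r="2*x"])
    show "(n + 2) * x = 2 * n * s + 2 * x" unfolding x n by (simp add: algebra_simps)
  qed (use assms(3,4) in simp_all)
  have gn: "good (2*n) (n+2) n"
  proof (rule good_intro[where q="p+1" and r=n])
    show "(n + 2) * n = 2 * n * (p + 1) + n" unfolding n by (simp add: algebra_simps)
  qed (use n in simp_all)
  show ?thesis using g1 gx gn by blast
qed

lemma caseD:
  fixes n x :: nat
  assumes "1 < x" "2 * x < n" "n mod 3 = 2" "x mod 3 = 1" "2 * n < 5 * x" "even n"
  shows "\<exists>t. good (2*n) t 1 \<and> good (2*n) t x \<and> good (2*n) t n"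
proof -
  obtain m where n: "n = 2 * m" using assms(6) evenE by blast
  define e where "e = m - x"
  have me: "m = x + e" using assms(2) n unfolding e_def by simp
  have e3: "e mod 3 = 0" using assms(3,4) n me by presburger
  have epos: "e > 0" using assms(2) n me by simp
  have e_ge: "e \<ge> 3" using e3 epos by presburger
  have m5e: "5 * e < m" using assms(5) n me by simp
  define r0 where "r0 = (if odd x then 1 else 3::nat)"
  have r0: "r0 < 4" "r0 \<ge> 1" unfolding r0_def by auto
  define P where "P = (\<lambda>k::nat. k mod 4 = r0 \<and> m \<le> 3 * (k * e))"
  have ex: "P (4 * m + r0)"
  proof -
    have "(4 * m + r0) mod 4 = r0" using r0 by simp
    moreover have "m \<le> 3 * ((4 * m + r0) * e)"
    proof -
      have "m \<le> 4 * m + r0" by simp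
      also have "\<dots> \<le> (4 * m + r0) * e" using epos by simp
      also have "\<dots> \<le> 3 * ((4 * m + r0) * e)" by simp
      finally show ?thesis .
    qed
    ultimately show ?thesis unfolding P_def by simp
  qed
  define k where "k = (LEAST k. P k)"
  have Pk: "P k" unfolding k_def using ex by (rule LeastI)
  have kmod: "k mod 4 = r0" and klow: "m \<le> 3 * (k * e)" using Pk unfolding P_def by auto
  define K where "K = k * e"
  have K1: "m \<le> 3 * K" using klow unfolding K_def .
  have kbounds: "3 * K \<le> 5 * m \<and> 3 * k \<le> 2 * m"
  proof (cases "k \<ge> 4")
    case True
    then obtain k' where k': "k = k' + 4" by (metis add.commute le_Suc_ex)
    have "k' < k" using k' by simp
    then have "\<not> P k'" unfolding k_def by (rule not_less_Least)
    moreover have "k' mod 4 = r0" using kmod k' by simp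
    ultimately have lt: "3 * (k' * e) < m" unfolding P_def by simp
    have Keq: "K = k' * e + 4 * e" unfolding K_def k' by (simp add: algebra_simps)
    have A: "3 * K \<le> 5 * m" using lt Keq m5e by simp
    have B: "3 * k \<le> 2 * m"
    proof (rule ccontr)
      assume "\<not> 3 * k \<le> 2 * m"
      then have "2 * m + 1 \<le> 3 * k" by simp
      then have X: "(2 * m + 1) * e \<le> (3 * k) * e" by (rule mult_le_mono1)
      have Y: "(2 * m) * 3 \<le> (2 * m) * e" using e_ge by (rule mult_le_mono2)
      have Z: "(2 * m + 1) * e = (2 * m) * e + e" by (simp add: algebra_simps)
      have W: "(3 * k) * e = 3 * K" unfolding K_def by (simp add: algebra_simps)
      have "6 * m + e \<le> 3 * K" using X Y Z W by linarith
      then show False using lt Keq m5e by simp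
    qed
    show ?thesis using A B by simp
  next
    case False
    then have "k \<le> 3" by simp
    then have "K \<le> 3 * e" unfolding K_def by simp
    then show ?thesis using m5e e_ge \<open>k \<le> 3\<close> by simp
  qed
  have K2: "3 * K \<le> 5 * m" and k2m: "3 * k \<le> 2 * m" using kbounds by auto
  have "k mod 4 = 1 \<or> k mod 4 = 3" using kmod unfolding r0_def by auto
  then have kodd: "odd k" by presburger
  obtain \<kappa> where kk: "k = 2 * \<kappa> + 1" using kodd oddE by blast
  define j where "j = k div 4"
  have kj: "k = 4 * j + r0" using kmod div_mult_mod_eq[of k 4] unfolding j_def by linarith
  define t where "t = 2 * m + k"
  have mpos: "m > 0" using m5e by simp
  have g1: "good (2*n) t 1"
    by (rule good_intro[where q=0 and r="2*m+k"]) (use n k2m mpos in \<open>simp_all add: t_def\<close>)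
  have gn: "good (2*n) t n"
  proof (rule good_intro[where q="m+\<kappa>" and r=n])
    show "t * n = 2 * n * (m + \<kappa>) + n" unfolding n t_def kk by (simp add: algebra_simps)
  qed (use n mpos in simp_all)
  have ident: "t * x + K = 4 * m * (x div 2 + j) + 3 * m"
  proof (cases "odd x")
    case True
    then obtain y where x: "x = 2 * y + 1" using oddE by blast
    have "r0 = 1" using True unfolding r0_def by simp
    then have kj': "k = 4 * j + 1" using kj by simp
    have "x div 2 = y" using x by simp
    then show ?thesis unfolding t_def K_def kj' me x by (simp add: algebra_simps)
  next
    case False
    then obtain y where x: "x = 2 * y" using evenE by blast
    have "r0 = 3" using False unfolding r0_def by simp
    then have kj': "k = 4 * j + 3" using kj by simp
    have "x div 2 = y" using x by simp
    then show ?thesis unfolding t_def K_def kj' me x by (simp add: algebra_simps)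
  qed
  have gx: "good (2*n) t x"
  proof (rule good_intro[where q="x div 2 + j" and r="3*m - K"])
    show "t * x = 2 * n * (x div 2 + j) + (3 * m - K)" using ident K2 n by simp
  qed (use n K1 K2 mpos in simp_all)
  show ?thesis using g1 gx gn by blast
qed

lemma col_lt3:
  fixes M a :: nat
  assumes "M > 0"
  shows "3 * (a mod M) div M < 3"
proof -
  have "3 * (a mod M) < 3 * M" using assms by simp
  then show ?thesis by (simp add: less_mult_imp_div_less mult.commute)
qed

lemma circ_adj_sym: "circ_adj M S a b \<Longrightarrow> circ_adj M S b a"
  unfolding circ_adj_def by (auto split: if_splits)

theorem theorem26:
  fixes n x :: nat
  assumes "1 < x" and "x < n"
    and "n mod 3 = 2" and "x mod 3 = 1"
    and "2 * x < n"
  shows "word_representable (circ_vertices (2 * n)) (circ_adj (2 * n) {1, x, n})"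
proof -
  have x4: "x \<ge> 4" using assms(1,4) by presburger
  have n9: "n \<ge> 9" using x4 assms(5) by simp
  have "\<exists>t. good (2*n) t 1 \<and> good (2*n) t x \<and> good (2*n) t n"
  proof (cases "5 * x \<le> 2 * n")
    case True
    then show ?thesis using caseA assms by blast
  next
    case False
    show ?thesis
    proof (cases "odd n")
      case True
      show ?thesis
      proof (cases "odd x")
        case True
        then show ?thesis using caseB \<open>odd n\<close> by blast
      next
        case False
        have "n \<le> 3 * x" using \<open>\<not> 5 * x \<le> 2 * n\<close> by simp
        then show ?thesis using caseC[OF \<open>odd n\<close> _ _ assms(5) n9] False by blast
      qed
    next
      case False
      then show ?thesis using caseD[OF assms(1,5,3,4)] \<open>\<not> 5 * x \<le> 2 * n\<close> by simp
    qed
  qed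
  then obtain t where g: "good (2*n) t 1" "good (2*n) t x" "good (2*n) t n" by blast
  define col where "col = (\<lambda>i. 3 * ((t * i) mod (2 * n)) div (2 * n))"
  have M: "2 * n > 0" using n9 by simp
  have col3: "\<forall>z<2*n. col z < 3" unfolding col_def using col_lt3[OF M] by blast
  have sym: "\<forall>a b. circ_adj (2 * n) {1, x, n} a b \<longrightarrow> circ_adj (2 * n) {1, x, n} b a"
    using circ_adj_sym by blast
  have gS: "\<forall>d\<in>{1, x, n}. good (2*n) t d" using g by blast
  have prp: "\<forall>a<2*n. \<forall>b<2*n. circ_adj (2 * n) {1, x, n} a b \<longrightarrow> col a \<noteq> col b"
    unfolding col_def using circ_proper[OF M gS] by blast
  have "word_representable {0..<2*n} (circ_adj (2 * n) {1, x, n})"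
    by (rule wr_3col[OF col3 sym prp])
  then show ?thesis unfolding circ_vertices_def .
qed


end
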